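(* Let $\mathcal{C}_1=\mathbb{C}\{e\}$ be the $2$-dimensional complex algebra with basis $1,e$ and $e^2=-1$. Let $A\in\mathcal{C}_1^{m\times n}$ be written as $A=A_0+A_1e$ with $A_0,A_1\in\mathbb{C}^{m\times n}$, and let $\overline{A}=A_0-A_1e$. For a positive integer $t$ define the $2t\times 2t$ matrices over $\mathcal{C}_1$ $$J_{2t}=\frac12\begin{pmatrix}(1-ie)I_t & -(i-e)I_t\\ -(i-e)I_t & (1-ie)I_t\end{pmatrix},\qquad J_{2t}'=\frac12\begin{pmatrix}(1-ie)I_t & (i-e)I_t\\ (i-e)I_t & (1-ie)I_t\end{pmatrix}.$$ Then $J_{2t}$ is invertible with $J_{2t}^{-1}=J_{2t}'$, and $$J_{2m}\begin{pmatrix}A&0\\0&\overline{A}\end{pmatrix}J_{2n}^{-1}=\begin{pmatrix}A_0+A_1i&0\\0&A_0-A_1i\end{pmatrix}.$$ In particular, if $m=n$ this is a similarity over $\mathcal{C}_1$.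
   Context: $i$ is the imaginary unit of $\mathbb{C}$, which commutes with $e$; $I_t$ is the $t\times t$ identity matrix. *)

theory Defs
  imports Complex_Main "Jordan_Normal_Form.Matrix"
begin

text \<open>The 2-dimensional complex algebra C_1 = C{e} with basis 1, e and e^2 = -1,
  where e commutes with the complex scalars. The element C1 a b stands for a + b e.\<close>

datatype c1 = C1 (c1_re: complex) (c1_e: complex)

instantiation c1 :: comm_ring_1
begin
definition "0 = C1 0 0"
definition "1 = C1 1 0"
definition "x + y = C1 (c1_re x + c1_re y) (c1_e x + c1_e y)"
definition "x - y = C1 (c1_re x - c1_re y) (c1_e x - c1_e y)"
definition "- x = C1 (- c1_re x) (- c1_e x)"
definition "x * y = C1 (c1_re x * c1_re y - c1_e x * c1_e y) (c1_re x * c1_e y + c1_e x * c1_re y)"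
instance
  by standard (auto simp: zero_c1_def one_c1_def plus_c1_def minus_c1_def uminus_c1_def
      times_c1_def algebra_simps intro: c1.expand)
end

definition c1_of :: "complex \<Rightarrow> c1" where "c1_of z = C1 z 0"
definition c1_unit_e :: c1 where "c1_unit_e = C1 0 1"
definition c1_i :: c1 where "c1_i = c1_of \<i>"

definition c1_conj :: "c1 \<Rightarrow> c1" where "c1_conj x = C1 (c1_re x) (- c1_e x)"

definition mat_A0 :: "c1 mat \<Rightarrow> complex mat" where "mat_A0 A = map_mat c1_re A"
definition mat_A1 :: "c1 mat \<Rightarrow> complex mat" where "mat_A1 A = map_mat c1_e A"
definition mat_conj :: "c1 mat \<Rightarrow> c1 mat" where "mat_conj A = map_mat c1_conj A"

definition J_mat :: "nat \<Rightarrow> c1 mat" where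
  "J_mat t = c1_of (1/2) \<cdot>\<^sub>m four_block_mat
     ((1 - c1_i * c1_unit_e) \<cdot>\<^sub>m 1\<^sub>m t) (- (c1_i - c1_unit_e) \<cdot>\<^sub>m 1\<^sub>m t)
     (- (c1_i - c1_unit_e) \<cdot>\<^sub>m 1\<^sub>m t) ((1 - c1_i * c1_unit_e) \<cdot>\<^sub>m 1\<^sub>m t)"

definition J'_mat :: "nat \<Rightarrow> c1 mat" where
  "J'_mat t = c1_of (1/2) \<cdot>\<^sub>m four_block_mat
     ((1 - c1_i * c1_unit_e) \<cdot>\<^sub>m 1\<^sub>m t) ((c1_i - c1_unit_e) \<cdot>\<^sub>m 1\<^sub>m t)
     ((c1_i - c1_unit_e) \<cdot>\<^sub>m 1\<^sub>m t) ((1 - c1_i * c1_unit_e) \<cdot>\<^sub>m 1\<^sub>m t)"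

end

theory Submission
  imports Defs
begin

lemma sl: "M \<in> carrier_mat m n \<Longrightarrow> ((p::'a::comm_ring_1) \<cdot>\<^sub>m 1\<^sub>m m) * M = p \<cdot>\<^sub>m M"
  by (subst mult_smult_assoc_mat[of _ m m _ n], auto)

lemma sr: "M \<in> carrier_mat m n \<Longrightarrow> M * ((p::'a::comm_ring_1) \<cdot>\<^sub>m 1\<^sub>m n) = p \<cdot>\<^sub>m M"
  by (subst mult_smult_distrib[of _ m n _ n], auto)

lemma J_eq: "J_mat t = four_block_mat
   ((c1_of (1/2) * (1 - c1_i * c1_unit_e)) \<cdot>\<^sub>m 1\<^sub>m t) ((c1_of (1/2) * (- (c1_i - c1_unit_e))) \<cdot>\<^sub>m 1\<^sub>m t)
   ((c1_of (1/2) * (- (c1_i - c1_unit_e))) \<cdot>\<^sub>m 1\<^sub>m t) ((c1_of (1/2) * (1 - c1_i * c1_unit_e)) \<cdot>\<^sub>m 1\<^sub>m t)"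
  unfolding J_mat_def
  by (subst smult_four_block_mat[OF smult_carrier_mat[OF one_carrier_mat] smult_carrier_mat[OF one_carrier_mat] smult_carrier_mat[OF one_carrier_mat] smult_carrier_mat[OF one_carrier_mat]], auto simp: smult_smult_assoc)

lemma J'_eq: "J'_mat t = four_block_mat
   ((c1_of (1/2) * (1 - c1_i * c1_unit_e)) \<cdot>\<^sub>m 1\<^sub>m t) ((c1_of (1/2) * ((c1_i - c1_unit_e))) \<cdot>\<^sub>m 1\<^sub>m t)
   ((c1_of (1/2) * ((c1_i - c1_unit_e))) \<cdot>\<^sub>m 1\<^sub>m t) ((c1_of (1/2) * (1 - c1_i * c1_unit_e)) \<cdot>\<^sub>m 1\<^sub>m t)"
  unfolding J'_mat_def
  by (subst smult_four_block_mat[OF smult_carrier_mat[OF one_carrier_mat] smult_carrier_mat[OF one_carrier_mat] smult_carrier_mat[OF one_carrier_mat] smult_carrier_mat[OF one_carrier_mat]], auto simp: smult_smult_assoc)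


lemma prod2: "four_block_mat ((p::'a::comm_ring_1) \<cdot>\<^sub>m 1\<^sub>m t) (q \<cdot>\<^sub>m 1\<^sub>m t) (q \<cdot>\<^sub>m 1\<^sub>m t) (p \<cdot>\<^sub>m 1\<^sub>m t)
  * four_block_mat (r \<cdot>\<^sub>m 1\<^sub>m t) (s \<cdot>\<^sub>m 1\<^sub>m t) (s \<cdot>\<^sub>m 1\<^sub>m t) (r \<cdot>\<^sub>m 1\<^sub>m t)
  = four_block_mat ((p*r+q*s) \<cdot>\<^sub>m 1\<^sub>m t) ((p*s+q*r) \<cdot>\<^sub>m 1\<^sub>m t) ((p*s+q*r) \<cdot>\<^sub>m 1\<^sub>m t) ((p*r+q*s) \<cdot>\<^sub>m 1\<^sub>m t)"
  by (subst mult_four_block_mat[where ?nr1.0=t and ?n1.0=t and ?nr2.0=t and ?n2.0=t and ?nc1.0=t and ?nc2.0=t],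
      auto simp: sl intro!: eq_matI)

lemma prod3: assumes "A \<in> carrier_mat m n" "B \<in> carrier_mat m n"
  shows "four_block_mat ((p::'a::comm_ring_1) \<cdot>\<^sub>m 1\<^sub>m m) (q \<cdot>\<^sub>m 1\<^sub>m m) (q \<cdot>\<^sub>m 1\<^sub>m m) (p \<cdot>\<^sub>m 1\<^sub>m m)
  * four_block_mat A (0\<^sub>m m n) (0\<^sub>m m n) B
  * four_block_mat (r \<cdot>\<^sub>m 1\<^sub>m n) (s \<cdot>\<^sub>m 1\<^sub>m n) (s \<cdot>\<^sub>m 1\<^sub>m n) (r \<cdot>\<^sub>m 1\<^sub>m n)
  = four_block_mat (mat m n (\<lambda>(i,j). p*r*A$$(i,j) + q*s*B$$(i,j)))
                   (mat m n (\<lambda>(i,j). p*s*A$$(i,j) + q*r*B$$(i,j)))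
                   (mat m n (\<lambda>(i,j). q*r*A$$(i,j) + p*s*B$$(i,j)))
                   (mat m n (\<lambda>(i,j). q*s*A$$(i,j) + p*r*B$$(i,j)))"
proof -
  have 1: "four_block_mat ((p::'a::comm_ring_1) \<cdot>\<^sub>m 1\<^sub>m m) (q \<cdot>\<^sub>m 1\<^sub>m m) (q \<cdot>\<^sub>m 1\<^sub>m m) (p \<cdot>\<^sub>m 1\<^sub>m m)
  * four_block_mat A (0\<^sub>m m n) (0\<^sub>m m n) B = four_block_mat (p \<cdot>\<^sub>m A) (q \<cdot>\<^sub>m B) (q \<cdot>\<^sub>m A) (p \<cdot>\<^sub>m B)"
    using assms
    by (subst mult_four_block_mat[where ?nr1.0=m and ?n1.0=m and ?nr2.0=m and ?n2.0=m and ?nc1.0=n and ?nc2.0=n],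
      auto simp: sl)
  show ?thesis unfolding 1 using assms
    by (subst mult_four_block_mat[where ?nr1.0=m and ?n1.0=n and ?nr2.0=m and ?n2.0=n and ?nc1.0=n and ?nc2.0=n],
      auto simp: sr intro!: eq_matI)
qed


definition "pp = c1_of (1/2) * (1 - c1_i * c1_unit_e)"
definition "qq = c1_of (1/2) * (- (c1_i - c1_unit_e))"
definition "ss = c1_of (1/2) * (c1_i - c1_unit_e)"

lemmas c1_ops = zero_c1_def one_c1_def plus_c1_def minus_c1_def uminus_c1_def
      times_c1_def c1_of_def c1_unit_e_def c1_i_def c1_conj_def pp_def qq_def ss_def

lemma s1: "pp*pp+qq*ss = 1" by (simp add: c1_ops algebra_simps)
lemma s2: "pp*ss+qq*pp = 0" by (simp add: c1_ops algebra_simps)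
lemma s3: "pp*pp*x+qq*ss*c1_conj x = c1_of (c1_re x + \<i> * c1_e x)"
  by (cases x) (simp add: c1_ops algebra_simps)
lemma s4: "pp*ss*x+qq*pp*c1_conj x = 0"
  by (cases x) (simp add: c1_ops algebra_simps)
lemma s5: "qq*pp*x+pp*ss*c1_conj x = 0"
  by (cases x) (simp add: c1_ops algebra_simps)
lemma s6: "qq*ss*x+pp*pp*c1_conj x = c1_of (c1_re x - \<i> * c1_e x)"
  by (cases x) (simp add: c1_ops algebra_simps)


lemma J_eq2: "J_mat t = four_block_mat (pp \<cdot>\<^sub>m 1\<^sub>m t) (qq \<cdot>\<^sub>m 1\<^sub>m t) (qq \<cdot>\<^sub>m 1\<^sub>m t) (pp \<cdot>\<^sub>m 1\<^sub>m t)"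
  unfolding J_eq pp_def qq_def ..
lemma J'_eq2: "J'_mat t = four_block_mat (pp \<cdot>\<^sub>m 1\<^sub>m t) (ss \<cdot>\<^sub>m 1\<^sub>m t) (ss \<cdot>\<^sub>m 1\<^sub>m t) (pp \<cdot>\<^sub>m 1\<^sub>m t)"
  unfolding J'_eq pp_def ss_def ..

lemma J_carrier: "J_mat t \<in> carrier_mat (2*t) (2*t)" "J'_mat t \<in> carrier_mat (2*t) (2*t)"
  unfolding J_eq2 J'_eq2 by (auto simp: four_block_carrier_mat)

lemma JJ: "J_mat t * J'_mat t = 1\<^sub>m (2 * t)"
proof -
  have "J_mat t * J'_mat t = four_block_mat (1\<^sub>m t) (0\<^sub>m t t) (0\<^sub>m t t) (1\<^sub>m t)"
    unfolding J_eq2 J'_eq2 prod2 s1 s2 by (auto intro!: eq_matI)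
  thus ?thesis by (simp add: mult_2)
qed

lemma J'J: "J'_mat t * J_mat t = 1\<^sub>m (2 * t)"
proof -
  have e: "pp*qq+ss*pp = 0" using s2 by (simp add: pp_def qq_def ss_def algebra_simps)
  have f: "pp*pp+ss*qq = 1" using s1 by (simp add: algebra_simps)
  have "J'_mat t * J_mat t = four_block_mat (1\<^sub>m t) (0\<^sub>m t t) (0\<^sub>m t t) (1\<^sub>m t)"
    unfolding J_eq2 J'_eq2 prod2 e f by (auto intro!: eq_matI)
  thus ?thesis by (simp add: mult_2)
qed

lemma Jinv: "invertible_mat (J_mat t)"
  unfolding invertible_mat_def inverts_mat_def using J_carrier JJ J'J
  by (metis carrier_matD square_mat.simps)

lemma main: assumes "A \<in> carrier_mat m n"
  shows "J_mat m * four_block_mat A (0\<^sub>m m n) (0\<^sub>m m n) (mat_conj A) * J'_mat n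
        = four_block_mat (map_mat c1_of (mat_A0 A + \<i> \<cdot>\<^sub>m mat_A1 A)) (0\<^sub>m m n) (0\<^sub>m m n)
            (map_mat c1_of (mat_A0 A - \<i> \<cdot>\<^sub>m mat_A1 A))"
proof -
  have c: "mat_conj A \<in> carrier_mat m n" using assms by (simp add: mat_conj_def)
  show ?thesis unfolding J_eq2 J'_eq2 prod3[OF assms c]
    using assms
    by (intro arg_cong4[where f=four_block_mat] eq_matI)
       (auto simp: mat_conj_def mat_A0_def mat_A1_def s3 s4 s5 s6)
qed


theorem theorem6:
  fixes A :: "c1 mat" and m n :: nat
  assumes "m > 0" and "n > 0" and "A \<in> carrier_mat m n"
  shows "(\<forall>t>0. invertible_mat (J_mat t) \<and> J_mat t * J'_mat t = 1\<^sub>m (2 * t)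
             \<and> J'_mat t * J_mat t = 1\<^sub>m (2 * t))
    \<and> J_mat m * four_block_mat A (0\<^sub>m m n) (0\<^sub>m m n) (mat_conj A) * J'_mat n
        = four_block_mat (map_mat c1_of (mat_A0 A + \<i> \<cdot>\<^sub>m mat_A1 A)) (0\<^sub>m m n) (0\<^sub>m m n)
            (map_mat c1_of (mat_A0 A - \<i> \<cdot>\<^sub>m mat_A1 A))
    \<and> (m = n \<longrightarrow> similar_mat
          (four_block_mat (map_mat c1_of (mat_A0 A + \<i> \<cdot>\<^sub>m mat_A1 A)) (0\<^sub>m m n) (0\<^sub>m m n)
            (map_mat c1_of (mat_A0 A - \<i> \<cdot>\<^sub>m mat_A1 A)))
          (four_block_mat A (0\<^sub>m m n) (0\<^sub>m m n) (mat_conj A)))"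
proof (intro conjI allI impI)
  show "invertible_mat (J_mat t)" for t by (rule Jinv)
  show "J_mat t * J'_mat t = 1\<^sub>m (2 * t)" for t by (rule JJ)
  show "J'_mat t * J_mat t = 1\<^sub>m (2 * t)" for t by (rule J'J)
  show M: "J_mat m * four_block_mat A (0\<^sub>m m n) (0\<^sub>m m n) (mat_conj A) * J'_mat n
        = four_block_mat (map_mat c1_of (mat_A0 A + \<i> \<cdot>\<^sub>m mat_A1 A)) (0\<^sub>m m n) (0\<^sub>m m n)
            (map_mat c1_of (mat_A0 A - \<i> \<cdot>\<^sub>m mat_A1 A))" by (rule main[OF assms(3)])
  assume mn: "m = n"
  have cA: "mat_conj A \<in> carrier_mat m n" using assms(3) by (simp add: mat_conj_def)
  have cB: "four_block_mat A (0\<^sub>m m n) (0\<^sub>m m n) (mat_conj A) \<in> carrier_mat (2*m) (2*m)"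
    using assms(3) cA mn by (auto simp: mult_2 four_block_carrier_mat)
  have cC: "four_block_mat (map_mat c1_of (mat_A0 A + \<i> \<cdot>\<^sub>m mat_A1 A)) (0\<^sub>m m n) (0\<^sub>m m n)
            (map_mat c1_of (mat_A0 A - \<i> \<cdot>\<^sub>m mat_A1 A)) \<in> carrier_mat (2*m) (2*m)"
    using assms(3) mn by (auto simp: mult_2 mat_A0_def mat_A1_def intro!: four_block_carrier_mat)
  show "similar_mat
          (four_block_mat (map_mat c1_of (mat_A0 A + \<i> \<cdot>\<^sub>m mat_A1 A)) (0\<^sub>m m n) (0\<^sub>m m n)
            (map_mat c1_of (mat_A0 A - \<i> \<cdot>\<^sub>m mat_A1 A)))
          (four_block_mat A (0\<^sub>m m n) (0\<^sub>m m n) (mat_conj A))"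
    unfolding similar_mat_def
    apply (rule exI[of _ "J_mat m"], rule exI[of _ "J'_mat m"])
    apply (rule similar_mat_witI[OF JJ J'J])
    using M[symmetric] mn cB cC J_carrier by auto
qed

end
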